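(* For every language $L$ that has a neutral letter, $Q^{\star}_L\mathrm{FO}\equiv Q^{1}_L\mathrm{FO}$, where in both logics the quantifier may bind relation variables of any arity $m\ge1$.
   Context: A letter $e$ is a neutral letter of $L\subseteq\Sigma^*$ if for all $u,v\in\Sigma^*$, $uv\in L\iff uev\in L$. Strings as structures: a nonempty string $b_0\cdots b_{n-1}$ over the ordered alphabet $(a_1,\dots,a_s)$ is the structure with universe $\{0,\dots,n-1\}$, natural order $<$, and unary predicates $P_{a_i}=\{j:b_j=a_i\}$. FO uses $=$, $<$, these predicates, $\min,\max$, connectives, $\exists,\forall$; no other built-in relations. $m$-ary second-order Lindström quantifiers: for $L$ over $(a_1,\dots,a_s)$ and distinct $m$-ary relation variables $\overline X=(X_1,\dots,X_k)$, over universe $\{0,\dots,n-1\}$ encode a relation $A_i\subseteq\{0,\dots,n-1\}^m$ by the bit string $s^i_0\cdots s^i_{n^m-1}$ with $s^i_j=1$ iff the $j$-th tuple of $\{0,\dots,n-1\}^m$ in lexicographic order is in $A_i$. For $Q^1_L$ the $2^{n^mk}$ assignments are ordered lexicographically by the interleaved code $s^1_0\cdots s^k_0s^1_1\cdots s^k_1\cdots$; for $Q^\star_L$ by the concatenated code $s^1_0\cdots s^1_{n^m-1}\cdots s^k_0\cdots s^k_{n^m-1}$. Then $\mathcal A\models Q\overline X[\varphi_1,\dots,\varphi_{s-1}]$ iff the word whose $i$-th letter is $a_j$ for the least $j$ with $\varphi_j$ true at the $i$-th assignment (and $a_s$ if none) lies in $L$. $Q^1_L\mathrm{FO}$ (resp.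 $Q^\star_L\mathrm{FO}$) consists of all formulas $Q^1_L\overline X[\varphi_1,\dots,\varphi_{s-1}]$ (resp. with $Q^\star_L$) with $\overline X$ a tuple of $m$-ary relation variables for some $m\ge1$ and $\varphi_i$ first-order formulas possibly containing $\overline X$. $\mathcal L\equiv\mathcal L'$ means over every string signature each sentence of either logic has an equivalent sentence of the other. *)

theory Defs
  imports Main
begin

text \<open>Ordered alphabets (a_1,...,a_s) are encoded as the letters 0,...,s-1
(letter a_i is the number i-1). Words are lists of natural numbers.\<close>

definition neutral_letter :: "nat list set \<Rightarrow> nat \<Rightarrow> nat \<Rightarrow> bool" where
  "neutral_letter L s e \<longleftrightarrow>
     (\<forall>u v. set u \<subseteq> {..<s} \<longrightarrow> set v \<subseteq> {..<s} \<longrightarrow> (u @ v \<in> L \<longleftrightarrow> u @ [e] @ v \<in> L))"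

datatype trm = Var nat | MinT | MaxT

datatype fo =
    Eq trm trm
  | Less trm trm
  | Pred nat trm
  | Rel nat "trm list"
  | Neg fo
  | Conj fo fo
  | Disj fo fo
  | Imp fo fo
  | Ex nat fo
  | All nat fo

fun tval :: "nat list \<Rightarrow> (nat \<Rightarrow> nat) \<Rightarrow> trm \<Rightarrow> nat" where
  "tval w v (Var x) = v x"
| "tval w v MinT = 0"
| "tval w v MaxT = length w - 1"

fun fvt :: "trm \<Rightarrow> nat set" where
  "fvt (Var x) = {x}"
| "fvt MinT = {}"
| "fvt MaxT = {}"

fun fv :: "fo \<Rightarrow> nat set" where
  "fv (Eq a b) = fvt a \<union> fvt b"
| "fv (Less a b) = fvt a \<union> fvt b"
| "fv (Pred c a) = fvt a"
| "fv (Rel X ts) = (\<Union>t\<in>set ts. fvt t)"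
| "fv (Neg p) = fv p"
| "fv (Conj p q) = fv p \<union> fv q"
| "fv (Disj p q) = fv p \<union> fv q"
| "fv (Imp p q) = fv p \<union> fv q"
| "fv (Ex x p) = fv p - {x}"
| "fv (All x p) = fv p - {x}"

text \<open>Well-formedness over string signature with t letters, where the only
relation variables are X_1..X_k (indices 0..k-1), all of arity m.\<close>
fun wf :: "nat \<Rightarrow> nat \<Rightarrow> nat \<Rightarrow> fo \<Rightarrow> bool" where
  "wf t m k (Eq a b) = True"
| "wf t m k (Less a b) = True"
| "wf t m k (Pred c a) = (c < t)"
| "wf t m k (Rel X ts) = (X < k \<and> length ts = m)"
| "wf t m k (Neg p) = wf t m k p"
| "wf t m k (Conj p q) = (wf t m k p \<and> wf t m k q)"
| "wf t m k (Disj p q) = (wf t m k p \<and> wf t m k q)"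
| "wf t m k (Imp p q) = (wf t m k p \<and> wf t m k q)"
| "wf t m k (Ex x p) = wf t m k p"
| "wf t m k (All x p) = wf t m k p"

fun sat :: "nat list \<Rightarrow> (nat \<Rightarrow> nat list set) \<Rightarrow> (nat \<Rightarrow> nat) \<Rightarrow> fo \<Rightarrow> bool" where
  "sat w R v (Eq a b) = (tval w v a = tval w v b)"
| "sat w R v (Less a b) = (tval w v a < tval w v b)"
| "sat w R v (Pred c a) = (tval w v a < length w \<and> w ! tval w v a = c)"
| "sat w R v (Rel X ts) = (map (tval w v) ts \<in> R X)"
| "sat w R v (Neg p) = (\<not> sat w R v p)"
| "sat w R v (Conj p q) = (sat w R v p \<and> sat w R v q)"
| "sat w R v (Disj p q) = (sat w R v p \<or> sat w R v q)"
| "sat w R v (Imp p q) = (sat w R v p \<longrightarrow> sat w R v q)"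
| "sat w R v (Ex x p) = (\<exists>i<length w. sat w R (v(x := i)) p)"
| "sat w R v (All x p) = (\<forall>i<length w. sat w R (v(x := i)) p)"

fun tuples :: "nat \<Rightarrow> nat \<Rightarrow> nat list list" where
  "tuples n 0 = [[]]"
| "tuples n (Suc m) = concat (map (\<lambda>i. map (Cons i) (tuples n m)) [0..<n])"

fun bitstrings :: "nat \<Rightarrow> bool list list" where
  "bitstrings 0 = [[]]"
| "bitstrings (Suc l) = map (Cons False) (bitstrings l) @ map (Cons True) (bitstrings l)"

definition decode_inter :: "nat \<Rightarrow> nat \<Rightarrow> nat \<Rightarrow> bool list \<Rightarrow> nat \<Rightarrow> nat list set" where
  "decode_inter n m k c i =
     (if i < k then {tuples n m ! j | j. j < n ^ m \<and> c ! (j * k + i)} else {})"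

definition decode_concat :: "nat \<Rightarrow> nat \<Rightarrow> nat \<Rightarrow> bool list \<Rightarrow> nat \<Rightarrow> nat list set" where
  "decode_concat n m k c i =
     (if i < k then {tuples n m ! j | j. j < n ^ m \<and> c ! (i * n ^ m + j)} else {})"

definition letter :: "nat list \<Rightarrow> (nat \<Rightarrow> nat list set) \<Rightarrow> fo list \<Rightarrow> nat" where
  "letter w R phis =
     (if \<exists>j<length phis. sat w R (\<lambda>_. 0) (phis ! j)
      then (LEAST j. j < length phis \<and> sat w R (\<lambda>_. 0) (phis ! j))
      else length phis)"

definition qsem :: "(nat \<Rightarrow> nat \<Rightarrow> nat \<Rightarrow> bool list \<Rightarrow> nat \<Rightarrow> nat list set)
    \<Rightarrow> nat list set \<Rightarrow> nat \<Rightarrow> nat \<Rightarrow> fo list \<Rightarrow> nat list \<Rightarrow> bool" where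
  "qsem dec L m k phis w =
     (map (\<lambda>c. letter w (dec (length w) m k c) phis) (bitstrings (length w ^ m * k)) \<in> L)"

abbreviation "qsem_inter \<equiv> qsem decode_inter"
abbreviation "qsem_concat \<equiv> qsem decode_concat"

text \<open>A sentence Q X_1..X_k [phi_1..phi_(s-1)] with m-ary relation variables,
over the string signature with t letters, for a language over s letters.\<close>
definition qsentence :: "nat \<Rightarrow> nat \<Rightarrow> nat \<Rightarrow> nat \<Rightarrow> fo list \<Rightarrow> bool" where
  "qsentence t s m k phis \<longleftrightarrow>
     1 \<le> m \<and> 1 \<le> k \<and> length phis = s - 1 \<and>
     (\<forall>p\<in>set phis. wf t m k p \<and> fv p = {})"

definition string_over :: "nat \<Rightarrow> nat list \<Rightarrow> bool" where
  "string_over t w \<longleftrightarrow> w \<noteq> [] \<and> set w \<subseteq> {..<t}"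

definition logics_equiv :: "nat list set \<Rightarrow> nat \<Rightarrow> bool" where
  "logics_equiv L s \<longleftrightarrow> (\<forall>t.
     (\<forall>m k phis. qsentence t s m k phis \<longrightarrow>
        (\<exists>m' k' psis. qsentence t s m' k' psis \<and>
           (\<forall>w. string_over t w \<longrightarrow> (qsem_concat L m k phis w \<longleftrightarrow> qsem_inter L m' k' psis w)))) \<and>
     (\<forall>m k phis. qsentence t s m k phis \<longrightarrow>
        (\<exists>m' k' psis. qsentence t s m' k' psis \<and>
           (\<forall>w. string_over t w \<longrightarrow> (qsem_inter L m k phis w \<longleftrightarrow> qsem_concat L m' k' psis w)))))"

end

theory Submission
  imports Defs
begin

lemma length_concat_const:
  "(\<forall>x\<in>set xs. length (f x) = L) \<Longrightarrow> length (concat (map f xs)) = length xs * L"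
  by (induction xs) auto

lemma nth_concat_blocks:
  "(\<forall>x\<in>set xs. length (f x) = L) \<Longrightarrow> a < length xs \<Longrightarrow> b < L \<Longrightarrow>
   concat (map f xs) ! (a*L+b) = f (xs!a) ! b"
proof (induction xs arbitrary: a)
  case Nil then show ?case by simp
next
  case (Cons x xs)
  show ?case
  proof (cases a)
    case 0 then show ?thesis using Cons.prems by (simp add: nth_append)
  next
    case (Suc a')
    have "concat (map f (x#xs)) ! (a*L+b) = concat (map f xs) ! (a'*L+b)"
      using Cons.prems Suc by (simp add: nth_append)
    also have "\<dots> = f (xs!a') ! b" using Cons Suc by simp
    finally show ?thesis using Suc by simp
  qed
qed

lemma length_tuples[simp]: "length (tuples n m) = n ^ m"
proof (induction m)
  case (Suc m)
  have "length (concat (map (\<lambda>i. map (Cons i) (tuples n m)) [0..<n])) = length [0..<n] * n ^ m"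
    by (rule length_concat_const) (simp add: Suc)
  then show ?case by simp
qed simp

lemma set_tuples: "t \<in> set (tuples n m) \<Longrightarrow> length t = m \<and> set t \<subseteq> {..<n}"
proof (induction m arbitrary: t)
  case (Suc m)
  then show ?case by fastforce
qed simp

lemma tuples_nth_props: "x < n ^ m \<Longrightarrow> length (tuples n m ! x) = m \<and> set (tuples n m ! x) \<subseteq> {..<n}"
  using set_tuples nth_mem by (metis length_tuples)

lemma tuples_Suc_nth:
  assumes "a < n" "b < n ^ m"
  shows "tuples n (Suc m) ! (a * n ^ m + b) = a # tuples n m ! b"
proof -
  have "tuples n (Suc m) = concat (map (\<lambda>i. map (Cons i) (tuples n m)) [0..<n])" by simp
  also have "\<dots> ! (a * n ^ m + b) = map (Cons ([0..<n]!a)) (tuples n m) ! b"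
    by (rule nth_concat_blocks) (use assms in auto)
  finally show ?thesis using assms by simp
qed

lemma tuples_append_nth:
  "a < n ^ r \<Longrightarrow> j < n ^ m \<Longrightarrow> tuples n (r + m) ! (a * n ^ m + j) = tuples n r ! a @ tuples n m ! j"
proof (induction r arbitrary: a)
  case 0 then show ?case by simp
next
  case (Suc r)
  define a1 where "a1 = a div n ^ r"
  define a2 where "a2 = a mod n ^ r"
  have npos: "n > 0" using Suc.prems by (cases n) auto
  have a: "a = a1 * n ^ r + a2" unfolding a1_def a2_def by (metis div_mult_mod_eq)
  have a1: "a1 < n" using Suc.prems(1) by (simp add: a1_def less_mult_imp_div_less mult.commute)
  have a2: "a2 < n ^ r" using npos by (simp add: a2_def)
  have b: "a2 * n ^ m + j < n ^ (r + m)"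
  proof -
    have "a2 * n ^ m + j < (a2 + 1) * n ^ m" using Suc.prems by simp
    also have "\<dots> \<le> n ^ r * n ^ m" using a2 by (intro mult_right_mono) auto
    finally show ?thesis by (simp add: power_add)
  qed
  have "a * n ^ m + j = a1 * n ^ (r + m) + (a2 * n ^ m + j)"
    by (simp add: a algebra_simps power_add)
  then have "tuples n (Suc r + m) ! (a * n ^ m + j) = a1 # tuples n (r+m) ! (a2 * n ^ m + j)"
    using tuples_Suc_nth[OF a1 b] by (simp add: add.assoc)
  also have "\<dots> = a1 # (tuples n r ! a2 @ tuples n m ! j)" using Suc.IH[OF a2 Suc.prems(2)] by simp
  also have "tuples n (Suc r) ! a = a1 # tuples n r ! a2"
    using tuples_Suc_nth[OF a1 a2] a by simp
  ultimately show ?case by simp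
qed

fun tnum :: "nat \<Rightarrow> nat list \<Rightarrow> nat" where
  "tnum n [] = 0"
| "tnum n (a # t) = a * n ^ length t + tnum n t"

lemma tnum_tuples: "x < n ^ m \<Longrightarrow> tnum n (tuples n m ! x) = x"
proof (induction m arbitrary: x)
  case 0 then show ?case by simp
next
  case (Suc m)
  have npos: "n > 0" using Suc.prems by (cases n) auto
  define a where "a = x div n ^ m"
  define b where "b = x mod n ^ m"
  have x: "x = a * n ^ m + b" unfolding a_def b_def by (metis div_mult_mod_eq)
  have a: "a < n" using Suc.prems by (simp add: a_def less_mult_imp_div_less)
  have b: "b < n ^ m" using npos by (simp add: b_def)
  show ?case using tuples_Suc_nth[OF a b] Suc.IH[OF b] tuples_nth_props[OF b] x by simp
qed

lemma tuples_inj: "x < n ^ m \<Longrightarrow> y < n ^ m \<Longrightarrow> tuples n m ! x = tuples n m ! y \<Longrightarrow> x = y"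
  by (metis tnum_tuples)

lemma tuples_thermo:
  "n \<ge> 1 \<Longrightarrow> i \<le> k \<Longrightarrow> tuples n k ! (n ^ i - 1) = replicate (k - i) 0 @ replicate i (n - 1)"
proof (induction k arbitrary: i)
  case 0 then show ?case by simp
next
  case (Suc k)
  show ?case
  proof (cases "i = Suc k")
    case True
    have e: "n ^ i - 1 = (n - 1) * n ^ k + (n ^ k - 1)"
      using Suc.prems True by (simp add: algebra_simps)
    have "n ^ k - 1 < n ^ k" using Suc.prems by simp
    then have "tuples n (Suc k) ! (n ^ i - 1) = (n - 1) # tuples n k ! (n ^ k - 1)"
      using e tuples_Suc_nth[of "n - 1" n "n^k - 1" k] Suc.prems by simp
    also have "\<dots> = (n - 1) # replicate k (n - 1)" using Suc.IH[of k] Suc.prems by simp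
    finally show ?thesis using True by simp
  next
    case False
    then have i: "i \<le> k" using Suc.prems by simp
    have lt: "n ^ i - 1 < n ^ k"
      using Suc.prems i by (meson diff_less less_le_trans one_le_power power_increasing zero_less_one le_less_trans order.strict_trans1 less_one not_less)
    have "tuples n (Suc k) ! (n ^ i - 1) = tuples n (Suc k) ! (0 * n ^ k + (n ^ i - 1))" by simp
    also have "\<dots> = 0 # tuples n k ! (n ^ i - 1)"
      using Suc.prems lt by (intro tuples_Suc_nth) auto
    also have "\<dots> = 0 # replicate (k - i) 0 @ replicate i (n - 1)" using Suc.IH[OF Suc.prems(1) i] by simp
    finally show ?thesis using i by (simp add: Suc_diff_le)
  qed
qed

section \<open>Bitstrings and masks\<close>

lemma bitstrings_length: "c \<in> set (bitstrings l) \<Longrightarrow> length c = l"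
  by (induction l arbitrary: c) auto

fun goodm :: "bool list \<Rightarrow> bool list \<Rightarrow> bool" where
  "goodm (m#M) (x#c) = ((m \<or> \<not> x) \<and> goodm M c)"
| "goodm _ _ = True"

fun extm :: "bool list \<Rightarrow> bool list \<Rightarrow> bool list" where
  "extm (m#M) (x#c) = (if m then x # extm M c else extm M c)"
| "extm _ _ = []"

lemma mask_bitstrings:
  "map (extm M) (filter (goodm M) (bitstrings (length M))) = bitstrings (length (filter (\<lambda>x. x) M))"
proof (induction M)
  case Nil then show ?case by simp
next
  case (Cons a M)
  define B where "B = bitstrings (length M)"
  define X where "X = map (extm M) (filter (goodm M) B)"
  have X: "X = bitstrings (length (filter (\<lambda>x. x) M))" using Cons by (simp add: X_def B_def)
  show ?case
  proof (cases a)
    case True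
    have "map (extm (a#M)) (filter (goodm (a#M)) (bitstrings (length (a#M)))) =
      map (Cons False) X @ map (Cons True) X"
      using True by (simp add: filter_map o_def X_def B_def)
    then show ?thesis using True X by simp
  next
    case False
    have "map (extm (a#M)) (filter (goodm (a#M)) (bitstrings (length (a#M)))) = X"
      using False by (simp add: filter_map o_def X_def B_def)
    then show ?thesis using False X by simp
  qed
qed

lemma goodm_iff: "length c = length M \<Longrightarrow> goodm M c = (\<forall>p<length M. \<not> M!p \<longrightarrow> \<not> c!p)"
proof (induction M arbitrary: c)
  case Nil then show ?case by simp
next
  case (Cons a M)
  then obtain x c' where c: "c = x # c'" by (cases c) auto
  show ?case using Cons c by (simp add: All_less_Suc2) blast
qed

lemma extm_eq: "length c = length M \<Longrightarrow> extm M c = map (nth c) (filter (nth M) [0..<length M])"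
proof (induction M arbitrary: c)
  case Nil then show ?case by simp
next
  case (Cons a M)
  then obtain x c' where c: "c = x # c'" by (cases c) auto
  have u: "[0..<Suc (length M)] = 0 # map Suc [0..<length M]" proof -
    have "[0..<Suc (length M)] = 0 # [1..<Suc (length M)]" using upt_conv_Cons[of 0 "Suc (length M)"] by simp
    also have "[1..<Suc (length M)] = map Suc [0..<length M]" by (simp add: map_Suc_upt)
    finally show ?thesis .
  qed
  show ?case using Cons c by (simp del: upt_Suc add: u filter_map o_def)
qed

lemma extract_bitstrings:
  assumes "sorted_wrt (<) PL" "set PL \<subseteq> {..<b}"
  shows "map (\<lambda>c. map (nth c) PL) (filter (\<lambda>c. \<forall>p<b. p \<notin> set PL \<longrightarrow> \<not> c!p) (bitstrings b))
         = bitstrings (length PL)"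
proof -
  define M where "M = map (\<lambda>p. p \<in> set PL) [0..<b]"
  have lM: "length M = b" by (simp add: M_def)
  have fl: "filter (nth M) [0..<b] = PL"
  proof -
    have "filter (nth M) [0..<b] = filter (\<lambda>p. p \<in> set PL) [0..<b]"
      by (rule filter_cong) (auto simp: M_def)
    also have "\<dots> = PL"
      using assms by (intro sorted_distinct_set_unique) (auto simp: strict_sorted_iff intro: sorted_wrt_filter)
    finally show ?thesis .
  qed
  have fl2: "filter (\<lambda>p. p \<in> set PL) [0..<b] = PL"
    using assms by (intro sorted_distinct_set_unique) (auto simp: strict_sorted_iff intro: sorted_wrt_filter)
  have "filter (\<lambda>x. x) M = map (\<lambda>p. p \<in> set PL) (filter (\<lambda>p. p \<in> set PL) [0..<b])"
    by (simp add: M_def filter_map o_def)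
  then have "length (filter (\<lambda>x. x) M) = length (filter (\<lambda>p. p \<in> set PL) [0..<b])" by simp
  then have lf: "length (filter (\<lambda>x. x) M) = length PL" using fl2 by simp
  have "filter (\<lambda>c. \<forall>p<b. p \<notin> set PL \<longrightarrow> \<not> c!p) (bitstrings b) = filter (goodm M) (bitstrings b)"
    by (rule filter_cong) (auto simp: goodm_iff bitstrings_length lM M_def)
  moreover have "map (\<lambda>c. map (nth c) PL) (filter (goodm M) (bitstrings b)) = map (extm M) (filter (goodm M) (bitstrings b))"
    by (rule map_cong) (auto simp: extm_eq bitstrings_length lM fl)
  ultimately show ?thesis using mask_bitstrings[of M] lM lf by metis
qed

section \<open>Neutral letter\<close>

lemma neutral_filter:
  assumes "neutral_letter L s e"
  shows "set x \<subseteq> {..<s} \<Longrightarrow> set u \<subseteq> {..<s} \<Longrightarrow> (u @ x \<in> L \<longleftrightarrow> u @ filter (\<lambda>y. y \<noteq> e) x \<in> L)"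
proof (induction x arbitrary: u)
  case Nil then show ?case by simp
next
  case (Cons a x)
  show ?case
  proof (cases "a = e")
    case True
    have sx: "set x \<subseteq> {..<s}" using Cons.prems by simp
    have "u @ x \<in> L \<longleftrightarrow> u @ [e] @ x \<in> L"
      using assms Cons.prems(2) sx unfolding neutral_letter_def by blast
    then have "u @ a # x \<in> L \<longleftrightarrow> u @ x \<in> L" using True by simp
    then show ?thesis using Cons True by simp
  next
    case False
    have "u @ a # x = (u @ [a]) @ x" by simp
    then show ?thesis using Cons.IH[of "u @ [a]"] Cons.prems False by simp
  qed
qed

lemma qsem_transfer:
  assumes neut: "neutral_letter L s e"
    and sPL: "sorted_wrt (<) PL" and bPL: "set PL \<subseteq> {..<b}" and lPL: "length PL = a"
    and F: "\<And>c. c \<in> set (bitstrings b) \<Longrightarrow>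
              F c = (if (\<forall>p<b. p \<notin> set PL \<longrightarrow> \<not> c!p) then G (map (nth c) PL) else e)"
    and Fs: "\<And>c. F c < s" and Gs: "\<And>c. G c < s"
  shows "map F (bitstrings b) \<in> L \<longleftrightarrow> map G (bitstrings a) \<in> L"
proof -
  define good where "good = (\<lambda>c. \<forall>p<b. p \<notin> set PL \<longrightarrow> \<not> c!p)"
  define P where "P = (\<lambda>y::nat. y \<noteq> e)"
  have "filter P (map F (bitstrings b)) = map F (filter (P \<circ> F) (bitstrings b))"
    by (simp add: filter_map)
  also have "filter (P \<circ> F) (bitstrings b) = filter (P \<circ> F) (filter good (bitstrings b))"
    unfolding filter_filter
  proof (rule filter_cong[OF refl])
    fix c assume c: "c \<in> set (bitstrings b)"
    show "(P \<circ> F) c = (good c \<and> (P \<circ> F) c)"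
      using F[OF c] by (cases "good c") (simp_all add: P_def good_def)
  qed
  also have "map F (filter (P \<circ> F) (filter good (bitstrings b))) =
      filter P (map F (filter good (bitstrings b)))" by (simp add: filter_map)
  also have "map F (filter good (bitstrings b)) = map G (map (\<lambda>c. map (nth c) PL) (filter good (bitstrings b)))"
    unfolding map_map
  proof (rule map_cong[OF refl])
    fix c assume "c \<in> set (filter good (bitstrings b))"
    then have "c \<in> set (bitstrings b)" "good c" by auto
    then show "F c = (G \<circ> (\<lambda>c. map (nth c) PL)) c" using F[of c] by (simp add: good_def)
  qed
  also have "map (\<lambda>c. map (nth c) PL) (filter good (bitstrings b)) = bitstrings a"
    using extract_bitstrings[OF sPL bPL] lPL by (simp add: good_def)
  finally have eq: "filter P (map F (bitstrings b)) = filter P (map G (bitstrings a))" .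
  have s1: "set (map F (bitstrings b)) \<subseteq> {..<s}" using Fs by auto
  have s2: "set (map G (bitstrings a)) \<subseteq> {..<s}" using Gs by auto
  have "map F (bitstrings b) \<in> L \<longleftrightarrow> filter P (map F (bitstrings b)) \<in> L"
    using neutral_filter[OF neut s1, of "[]"] unfolding P_def by simp
  also have "\<dots> \<longleftrightarrow> map G (bitstrings a) \<in> L"
    using neutral_filter[OF neut s2, of "[]"] eq unfolding P_def by simp
  finally show ?thesis .
qed

definition TT :: fo where "TT = Eq MinT MinT"
definition FF :: fo where "FF = Neg TT"

fun conjs :: "fo list \<Rightarrow> fo" where
  "conjs [] = TT" | "conjs (p # ps) = Conj p (conjs ps)"
fun disjs :: "fo list \<Rightarrow> fo" where
  "disjs [] = FF" | "disjs (p # ps) = Disj p (disjs ps)"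
fun alls :: "nat list \<Rightarrow> fo \<Rightarrow> fo" where
  "alls [] p = p" | "alls (x # xs) p = All x (alls xs p)"
fun upd :: "(nat \<Rightarrow> nat) \<Rightarrow> nat list \<Rightarrow> nat list \<Rightarrow> nat \<Rightarrow> nat" where
  "upd v (x # xs) (t # ts) = upd (v(x := t)) xs ts"
| "upd v _ _ = v"

lemma sat_conjs[simp]: "sat w R v (conjs ps) = (\<forall>p\<in>set ps. sat w R v p)"
  by (induction ps) (auto simp: TT_def)
lemma sat_disjs[simp]: "sat w R v (disjs ps) = (\<exists>p\<in>set ps. sat w R v p)"
  by (induction ps) (auto simp: TT_def FF_def)
lemma fv_conjs[simp]: "fv (conjs ps) = (\<Union>p\<in>set ps. fv p)"
  by (induction ps) (auto simp: TT_def)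
lemma fv_disjs[simp]: "fv (disjs ps) = (\<Union>p\<in>set ps. fv p)"
  by (induction ps) (auto simp: TT_def FF_def)
lemma wf_conjs[simp]: "wf t m k (conjs ps) = (\<forall>p\<in>set ps. wf t m k p)"
  by (induction ps) (auto simp: TT_def)
lemma wf_disjs[simp]: "wf t m k (disjs ps) = (\<forall>p\<in>set ps. wf t m k p)"
  by (induction ps) (auto simp: TT_def FF_def)
lemma fv_alls[simp]: "fv (alls xs p) = fv p - set xs"
  by (induction xs) auto
lemma wf_alls[simp]: "wf t m k (alls xs p) = wf t m k p"
  by (induction xs) auto

lemma sat_alls: "sat w R v (alls xs p) =
   (\<forall>ts. length ts = length xs \<longrightarrow> set ts \<subseteq> {..<length w} \<longrightarrow> sat w R (upd v xs ts) p)"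
proof (induction xs arbitrary: v)
  case Nil then show ?case by simp
next
  case (Cons x xs)
  show ?case
  proof
    assume h: "sat w R v (alls (x # xs) p)"
    show "\<forall>ts. length ts = length (x # xs) \<longrightarrow> set ts \<subseteq> {..<length w} \<longrightarrow> sat w R (upd v (x # xs) ts) p"
    proof (intro allI impI)
      fix ts assume "length ts = length (x # xs)" "set ts \<subseteq> {..<length w}"
      then obtain t ts' where ts: "ts = t # ts'" "length ts' = length xs" "t < length w" "set ts' \<subseteq> {..<length w}"
        by (cases ts) auto
      have "sat w R (v(x := t)) (alls xs p)" using h ts(3) by simp
      then have "\<forall>ts. length ts = length xs \<longrightarrow> set ts \<subseteq> {..<length w} \<longrightarrow> sat w R (upd (v(x := t)) xs ts) p"
        using Cons.IH by blast
      then show "sat w R (upd v (x # xs) ts) p" using ts by simp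
    qed
  next
    assume h: "\<forall>ts. length ts = length (x # xs) \<longrightarrow> set ts \<subseteq> {..<length w} \<longrightarrow> sat w R (upd v (x # xs) ts) p"
    show "sat w R v (alls (x # xs) p)"
    proof -
      have "\<forall>i<length w. sat w R (v(x := i)) (alls xs p)"
      proof (intro allI impI)
        fix i assume i: "i < length w"
        show "sat w R (v(x := i)) (alls xs p)" unfolding Cons.IH
        proof (intro allI impI)
          fix ts assume "length ts = length xs" "set ts \<subseteq> {..<length w}"
          then show "sat w R (upd (v(x := i)) xs ts) p" using h[rule_format, of "i # ts"] i by simp
        qed
      qed
      then show ?thesis by simp
    qed
  qed
qed

lemma upd_notin: "y \<notin> set xs \<Longrightarrow> upd v xs ts y = v y"
  by (induction v xs ts rule: upd.induct) auto

lemma map_upd: "distinct xs \<Longrightarrow> length ts = length xs \<Longrightarrow> map (upd v xs ts) xs = ts"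
proof (induction xs arbitrary: v ts)
  case Nil then show ?case by simp
next
  case (Cons x xs)
  then obtain t ts' where ts: "ts = t # ts'" by (cases ts) auto
  have "upd (v(x := t)) xs ts' x = t" using Cons.prems by (simp add: upd_notin)
  then show ?case using Cons ts by simp
qed

lemma upd_upt: "length ts = r \<Longrightarrow> l < r \<Longrightarrow> upd v [0..<r] ts l = ts ! l"
  using map_upd[of "[0..<r]" ts v] by (metis diff_zero distinct_upt length_upt nth_map nth_upt plus_nat.add_0)

fun tr :: "(nat \<Rightarrow> trm list \<Rightarrow> fo) \<Rightarrow> fo \<Rightarrow> fo" where
  "tr \<rho> (Rel X ts) = \<rho> X ts"
| "tr \<rho> (Neg p) = Neg (tr \<rho> p)"
| "tr \<rho> (Conj p q) = Conj (tr \<rho> p) (tr \<rho> q)"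
| "tr \<rho> (Disj p q) = Disj (tr \<rho> p) (tr \<rho> q)"
| "tr \<rho> (Imp p q) = Imp (tr \<rho> p) (tr \<rho> q)"
| "tr \<rho> (Ex x p) = Ex x (tr \<rho> p)"
| "tr \<rho> (All x p) = All x (tr \<rho> p)"
| "tr \<rho> p = p"

lemma wf_tr: "wf t m k p \<Longrightarrow> (\<And>i ts. i < k \<Longrightarrow> length ts = m \<Longrightarrow> wf t m' k' (\<rho> i ts)) \<Longrightarrow> wf t m' k' (tr \<rho> p)"
  by (induction p) auto

lemma fv_tr: "(\<And>i ts. fv (\<rho> i ts) = (\<Union>x\<in>set ts. fvt x)) \<Longrightarrow> fv (tr \<rho> p) = fv p"
  by (induction p) auto

lemma sat_tr: "wf t m k p \<Longrightarrow>
  (\<And>i ts v. i < k \<Longrightarrow> length ts = m \<Longrightarrow> sat w R' v (\<rho> i ts) = (map (tval w v) ts \<in> R i)) \<Longrightarrow>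
  sat w R' v (tr \<rho> p) = sat w R v p"
  by (induction p arbitrary: v) auto

definition mkpsis :: "fo \<Rightarrow> (nat \<Rightarrow> trm list \<Rightarrow> fo) \<Rightarrow> nat \<Rightarrow> fo list \<Rightarrow> fo list" where
  "mkpsis G \<rho> e phis = map (\<lambda>j. if j = e then Disj (Neg G) (tr \<rho> (phis!j)) else Conj G (tr \<rho> (phis!j))) [0..<length phis]"

lemma letter_le: "letter w R phis \<le> length phis"
proof (cases "\<exists>j<length phis. sat w R (\<lambda>_. 0) (phis ! j)")
  case True
  then obtain j where j: "j < length phis" "sat w R (\<lambda>_. 0) (phis ! j)" by blast
  have "(LEAST j. j < length phis \<and> sat w R (\<lambda>_. 0) (phis ! j)) \<le> j"
    by (rule Least_le) (use j in simp)
  then show ?thesis using True j unfolding letter_def by simp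
next
  case False then show ?thesis unfolding letter_def by auto
qed

lemma letter_psis:
  assumes e: "e \<le> length phis"
    and tr: "sat w R' (\<lambda>_. 0) G \<Longrightarrow> \<forall>j<length phis. sat w R' (\<lambda>_. 0) (tr \<rho> (phis!j)) = sat w R (\<lambda>_. 0) (phis!j)"
  shows "letter w R' (mkpsis G \<rho> e phis) = (if sat w R' (\<lambda>_. 0) G then letter w R phis else e)"
proof (cases "sat w R' (\<lambda>_. 0) G")
  case True
  have eq: "\<And>j. j < length phis \<Longrightarrow> sat w R' (\<lambda>_. 0) (mkpsis G \<rho> e phis ! j) = sat w R (\<lambda>_. 0) (phis!j)"
    using tr[OF True] True by (simp add: mkpsis_def)
  have l: "length (mkpsis G \<rho> e phis) = length phis" by (simp add: mkpsis_def)
  have "(\<lambda>j. j < length phis \<and> sat w R' (\<lambda>_. 0) (mkpsis G \<rho> e phis ! j)) =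
        (\<lambda>j. j < length phis \<and> sat w R (\<lambda>_. 0) (phis ! j))"
    using eq by auto
  then show ?thesis using True l unfolding letter_def by (simp only: l) (metis (no_types, lifting))
next
  case False
  have eq: "\<And>j. j < length phis \<Longrightarrow> sat w R' (\<lambda>_. 0) (mkpsis G \<rho> e phis ! j) = (j = e)"
    using False by (simp add: mkpsis_def)
  have l: "length (mkpsis G \<rho> e phis) = length phis" by (simp add: mkpsis_def)
  show ?thesis
  proof (cases "e < length phis")
    case True
    have "(LEAST j. j < length phis \<and> sat w R' (\<lambda>_. 0) (mkpsis G \<rho> e phis ! j)) = e"
      by (rule Least_equality) (use eq True in auto)
    then show ?thesis using False True eq unfolding letter_def l by auto
  next
    case False2: False
    then have "e = length phis" using e by simp
    then show ?thesis using False eq unfolding letter_def l by auto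
  qed
qed

lemma direction:
  fixes dec dec' :: "nat \<Rightarrow> nat \<Rightarrow> nat \<Rightarrow> bool list \<Rightarrow> nat \<Rightarrow> nat list set"
  assumes neut: "neutral_letter L s e" and es: "e < s"
    and qs: "qsentence t s m k phis" and m': "1 \<le> m'" and k': "1 \<le> k'"
    and Gwf: "wf t m' k' G" and Gfv: "fv G = {}"
    and \<rho>wf: "\<And>i ts. i < k \<Longrightarrow> length ts = m \<Longrightarrow> wf t m' k' (\<rho> i ts)"
    and \<rho>fv: "\<And>i ts. fv (\<rho> i ts) = (\<Union>x\<in>set ts. fvt x)"
    and sem: "\<And>w. string_over t w \<Longrightarrow> \<exists>PL. sorted_wrt (<) PL \<and> set PL \<subseteq> {..<length w ^ m' * k'}
        \<and> length PL = length w ^ m * k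
        \<and> (\<forall>c\<in>set (bitstrings (length w ^ m' * k')).
             (sat w (dec' (length w) m' k' c) (\<lambda>_. 0) G \<longleftrightarrow> (\<forall>p<length w ^ m' * k'. p \<notin> set PL \<longrightarrow> \<not> c!p))
           \<and> ((\<forall>p<length w ^ m' * k'. p \<notin> set PL \<longrightarrow> \<not> c!p) \<longrightarrow>
               (\<forall>i<k. \<forall>ts v. length ts = m \<longrightarrow>
                  (sat w (dec' (length w) m' k' c) v (\<rho> i ts) \<longleftrightarrow>
                   map (tval w v) ts \<in> dec (length w) m k (map (nth c) PL) i))))"
  shows "qsentence t s m' k' (mkpsis G \<rho> e phis) \<and>
     (\<forall>w. string_over t w \<longrightarrow> (qsem dec L m k phis w \<longleftrightarrow> qsem dec' L m' k' (mkpsis G \<rho> e phis) w))"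
proof
  have lp: "length phis = s - 1" using qs by (simp add: qsentence_def)
  have phis: "\<And>p. p \<in> set phis \<Longrightarrow> wf t m k p \<and> fv p = {}" using qs by (simp add: qsentence_def)
  have phisj: "\<And>j. j < length phis \<Longrightarrow> wf t m k (phis!j) \<and> fv (phis!j) = {}" using phis nth_mem by blast
  have elem: "\<forall>p\<in>set (mkpsis G \<rho> e phis). wf t m' k' p \<and> fv p = {}"
  proof
    fix p assume "p \<in> set (mkpsis G \<rho> e phis)"
    then obtain j where j: "j < length phis"
      and p: "p = (if j = e then Disj (Neg G) (tr \<rho> (phis!j)) else Conj G (tr \<rho> (phis!j)))"
      by (auto simp: mkpsis_def)
    have "wf t m' k' (tr \<rho> (phis!j))" using phisj[OF j] \<rho>wf by (intro wf_tr) auto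
    moreover have "fv (tr \<rho> (phis!j)) = {}" using phisj[OF j] fv_tr[of \<rho>, OF \<rho>fv] by simp
    ultimately show "wf t m' k' p \<and> fv p = {}" using p Gwf Gfv by auto
  qed
  show "qsentence t s m' k' (mkpsis G \<rho> e phis)"
    using m' k' lp elem unfolding qsentence_def by (simp add: mkpsis_def)
  show "\<forall>w. string_over t w \<longrightarrow> (qsem dec L m k phis w \<longleftrightarrow> qsem dec' L m' k' (mkpsis G \<rho> e phis) w)"
  proof (intro allI impI)
    fix w assume w: "string_over t w"
    define n where "n = length w"
    have "\<exists>PL. sorted_wrt (<) PL \<and> set PL \<subseteq> {..<n ^ m' * k'}
        \<and> length PL = n ^ m * k
        \<and> (\<forall>c\<in>set (bitstrings (n ^ m' * k')).
             (sat w (dec' n m' k' c) (\<lambda>_. 0) G \<longleftrightarrow> (\<forall>p<n ^ m' * k'. p \<notin> set PL \<longrightarrow> \<not> c!p))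
           \<and> ((\<forall>p<n ^ m' * k'. p \<notin> set PL \<longrightarrow> \<not> c!p) \<longrightarrow>
               (\<forall>i<k. \<forall>ts v. length ts = m \<longrightarrow>
                  (sat w (dec' n m' k' c) v (\<rho> i ts) \<longleftrightarrow>
                   map (tval w v) ts \<in> dec n m k (map (nth c) PL) i))))"
      using sem[OF w] unfolding n_def .
    then obtain PL where H: "sorted_wrt (<) PL \<and> set PL \<subseteq> {..<n ^ m' * k'}
        \<and> length PL = n ^ m * k
        \<and> (\<forall>c\<in>set (bitstrings (n ^ m' * k')).
             (sat w (dec' n m' k' c) (\<lambda>_. 0) G \<longleftrightarrow> (\<forall>p<n ^ m' * k'. p \<notin> set PL \<longrightarrow> \<not> c!p))
           \<and> ((\<forall>p<n ^ m' * k'. p \<notin> set PL \<longrightarrow> \<not> c!p) \<longrightarrow>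
               (\<forall>i<k. \<forall>ts v. length ts = m \<longrightarrow>
                  (sat w (dec' n m' k' c) v (\<rho> i ts) \<longleftrightarrow>
                   map (tval w v) ts \<in> dec n m k (map (nth c) PL) i))))"
      by blast
    have sPL: "sorted_wrt (<) PL" and bPL: "set PL \<subseteq> {..<n ^ m' * k'}"
      and lPL: "length PL = n ^ m * k" using H by auto
    have S: "\<And>c. c\<in>set (bitstrings (n ^ m' * k')) \<Longrightarrow>
             (sat w (dec' n m' k' c) (\<lambda>_. 0) G \<longleftrightarrow> (\<forall>p<n ^ m' * k'. p \<notin> set PL \<longrightarrow> \<not> c!p))
           \<and> ((\<forall>p<n ^ m' * k'. p \<notin> set PL \<longrightarrow> \<not> c!p) \<longrightarrow>
               (\<forall>i<k. \<forall>ts v. length ts = m \<longrightarrow>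
                  (sat w (dec' n m' k' c) v (\<rho> i ts) \<longleftrightarrow>
                   map (tval w v) ts \<in> dec n m k (map (nth c) PL) i)))"
      using H by (elim conjE) (erule bspec)
    define F where "F = (\<lambda>c. letter w (dec' n m' k' c) (mkpsis G \<rho> e phis))"
    define G' where "G' = (\<lambda>c. letter w (dec n m k c) phis)"
    have ls: "length phis < s" using lp es by simp
    have lm: "length (mkpsis G \<rho> e phis) = length phis" by (simp add: mkpsis_def)
    have Fs: "\<And>c. F c < s" unfolding F_def using letter_le[of w _ "mkpsis G \<rho> e phis"] ls lm
      by (metis le_less_trans)
    have Gs: "\<And>c. G' c < s" unfolding G'_def using letter_le[of w _ phis] ls
      by (metis le_less_trans)
    have Fc: "F c = (if (\<forall>p<n ^ m' * k'. p \<notin> set PL \<longrightarrow> \<not> c!p) then G' (map (nth c) PL) else e)"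
      if c: "c \<in> set (bitstrings (n ^ m' * k'))" for c
    proof -
      have "F c = (if sat w (dec' n m' k' c) (\<lambda>_. 0) G then G' (map (nth c) PL) else e)"
        unfolding F_def G'_def
      proof (rule letter_psis)
        show "e \<le> length phis" using lp es by simp
        assume g: "sat w (dec' n m' k' c) (\<lambda>_. 0) G"
        show "\<forall>j<length phis. sat w (dec' n m' k' c) (\<lambda>_. 0) (tr \<rho> (phis!j)) = sat w (dec n m k (map (nth c) PL)) (\<lambda>_. 0) (phis!j)"
        proof (intro allI impI)
          fix j assume j: "j < length phis"
          show "sat w (dec' n m' k' c) (\<lambda>_. 0) (tr \<rho> (phis!j)) = sat w (dec n m k (map (nth c) PL)) (\<lambda>_. 0) (phis!j)"
          proof -
            have good: "\<forall>p<n ^ m' * k'. p \<notin> set PL \<longrightarrow> \<not> c!p" using S[OF c] g by blast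
            have rho: "\<forall>i<k. \<forall>ts v. length ts = m \<longrightarrow>
                  (sat w (dec' n m' k' c) v (\<rho> i ts) \<longleftrightarrow> map (tval w v) ts \<in> dec n m k (map (nth c) PL) i)"
              using S[OF c] good by blast
            show ?thesis by (rule sat_tr[where t=t and m=m and k=k]) (use phisj[OF j] rho in auto)
          qed
        qed
      qed
      then show ?thesis using S[OF c] by simp
    qed
    have "map F (bitstrings (n ^ m' * k')) \<in> L \<longleftrightarrow> map G' (bitstrings (n ^ m * k)) \<in> L"
      by (rule qsem_transfer[OF neut sPL bPL lPL Fc Fs Gs])
    then show "qsem dec L m k phis w \<longleftrightarrow> qsem dec' L m' k' (mkpsis G \<rho> e phis) w"
      unfolding qsem_def F_def G'_def n_def by simp
  qed
qed

definition encT :: "nat \<Rightarrow> nat \<Rightarrow> trm list" where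
  "encT k i = replicate (k - i) MinT @ replicate i MaxT"

lemma length_encT[simp]: "i \<le> k \<Longrightarrow> length (encT k i) = k"
  by (simp add: encT_def)

lemma fvt_encT: "x \<in> set (encT k i) \<Longrightarrow> fvt x = {}"
  by (auto simp: encT_def)

lemma map_tval_encT: "w \<noteq> [] \<Longrightarrow> i \<le> k \<Longrightarrow>
   map (tval w v) (encT k i) = tuples (length w) k ! (length w ^ i - 1)"
proof -
  assume "w \<noteq> []" "i \<le> k"
  then have "length w \<ge> 1" by (cases w) auto
  then show ?thesis using \<open>i \<le> k\<close> tuples_thermo[of "length w" i k] by (simp add: encT_def)
qed

lemma E_bound: fixes n i k :: nat shows "n \<ge> 1 \<Longrightarrow> i < k \<Longrightarrow> n ^ i - 1 < n ^ k"
proof -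
  assume "n \<ge> 1" "i < k"
  then have "n ^ i \<le> n ^ k" using power_increasing[of i k n] by simp
  moreover have "n ^ i \<ge> 1" using \<open>n \<ge> 1\<close> by simp
  ultimately show ?thesis by linarith
qed

lemma divmod_unique:
  fixes J J' i i' k :: nat
  assumes "i < k" "i' < k" "J * k + i = J' * k + i'"
  shows "J = J' \<and> i = i'"
proof -
  have "(J * k + i) div k = J" "(J * k + i) mod k = i" using assms(1) by auto
  moreover have "(J' * k + i') div k = J'" "(J' * k + i') mod k = i'" using assms(2) by auto
  moreover have "(J * k + i) div k = (J' * k + i') div k" "(J * k + i) mod k = (J' * k + i') mod k"
    using assms(3) by simp_all
  ultimately show ?thesis by metis
qed

lemma lex_lt:
  fixes x y N :: nat
  assumes "x < y" "N > 0"
  shows "x div N < y div N \<or> (x div N = y div N \<and> x mod N < y mod N)"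
proof -
  have "x div N \<le> y div N" using assms div_le_mono[of x y N] by simp
  moreover have "x div N = y div N \<Longrightarrow> x mod N < y mod N"
    using assms by (metis add_less_cancel_left div_mult_mod_eq)
  ultimately show ?thesis by linarith
qed

lemma lt_block: "J1 < J2 \<Longrightarrow> i1 < k \<Longrightarrow> J1 * k + i1 < J2 * k + (i2::nat)"
proof -
  assume "J1 < J2" "i1 < k"
  then have "J1 * k + i1 < (J1 + 1) * k" by simp
  also have "\<dots> \<le> J2 * k" using \<open>J1 < J2\<close> by (intro mult_right_mono) auto
  finally show ?thesis by simp
qed

section \<open>Direction 1: concatenated to interleaved\<close>

definition \<rho>1 :: "nat \<Rightarrow> nat \<Rightarrow> trm list \<Rightarrow> fo" where
  "\<rho>1 k i ts = Rel i (encT k i @ ts)"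

definition G1 :: "nat \<Rightarrow> nat \<Rightarrow> fo" where
  "G1 k m = conjs (map (\<lambda>i. alls [0..<k+m] (Imp (Rel i (map Var [0..<k+m]))
        (conjs (map (\<lambda>l. Eq (Var l) (encT k i ! l)) [0..<k])))) [0..<k])"

definition pos1 :: "nat \<Rightarrow> nat \<Rightarrow> nat \<Rightarrow> nat \<Rightarrow> nat \<Rightarrow> nat" where
  "pos1 n m k i j = ((n ^ i - 1) * n ^ m + j) * k + i"

definition PL1 :: "nat \<Rightarrow> nat \<Rightarrow> nat \<Rightarrow> nat list" where
  "PL1 n m k = concat (map (\<lambda>i. map (pos1 n m k i) [0..<n ^ m]) [0..<k])"

context
  fixes n m k :: nat
  assumes n: "n \<ge> 1"
begin

lemma PL1_length: "length (PL1 n m k) = n ^ m * k"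
  unfolding PL1_def by (subst length_concat_const[where L = "n ^ m"]) auto

lemma PL1_nth: "i < k \<Longrightarrow> j < n ^ m \<Longrightarrow> PL1 n m k ! (i * n ^ m + j) = pos1 n m k i j"
  unfolding PL1_def by (subst nth_concat_blocks[where L = "n ^ m"]) auto

lemma PL1_set: "set (PL1 n m k) = {pos1 n m k i j | i j. i < k \<and> j < n ^ m}"
  unfolding PL1_def by auto blast

lemma J1_bound: "i < k \<Longrightarrow> j < n ^ m \<Longrightarrow> (n ^ i - 1) * n ^ m + j < n ^ (k + m)"
proof -
  assume i: "i < k" and j: "j < n ^ m"
  have "(n ^ i - 1) * n ^ m + j < (n ^ i - 1 + 1) * n ^ m" using j by simp
  also have "\<dots> \<le> n ^ k * n ^ m" using E_bound[OF n i] by (intro mult_right_mono) auto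
  finally show ?thesis by (simp add: power_add)
qed

lemma pos1_bound: "i < k \<Longrightarrow> j < n ^ m \<Longrightarrow> pos1 n m k i j < n ^ (k + m) * k"
proof -
  assume i: "i < k" and j: "j < n ^ m"
  have "((n ^ i - 1) * n ^ m + j) * k + i < n ^ (k + m) * k + 0"
    by (rule lt_block[OF J1_bound[OF i j] i])
  then show ?thesis by (simp add: pos1_def)
qed

lemma pos1_mono:
  assumes "i1 < k" "i2 < k" "j1 < n ^ m" "j2 < n ^ m" "i1 < i2 \<or> (i1 = i2 \<and> j1 < j2)"
  shows "pos1 n m k i1 j1 < pos1 n m k i2 j2"
proof (cases "n = 1")
  case True
  then show ?thesis using assms by (simp add: pos1_def)
next
  case False
  then have n2: "n \<ge> 2" using n by simp
  have "(n ^ i1 - 1) * n ^ m + j1 < (n ^ i2 - 1) * n ^ m + j2"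
  proof (cases "i1 < i2")
    case True
    have "n ^ i1 < n ^ i2" using True n2 by (simp add: power_strict_increasing)
    then have le: "n ^ i1 \<le> n ^ i2 - 1" by simp
    have "(n ^ i1 - 1) * n ^ m + j1 < (n ^ i1 - 1 + 1) * n ^ m" using assms by simp
    also have "\<dots> = n ^ i1 * n ^ m" using n by simp
    also have "\<dots> \<le> (n ^ i2 - 1) * n ^ m" using le by (intro mult_right_mono) auto
    finally show ?thesis by simp
  next
    case False
    then show ?thesis using assms by simp
  qed
  from lt_block[OF this assms(1)] show ?thesis by (simp add: pos1_def)
qed

lemma PL1_sorted: "sorted_wrt (<) (PL1 n m k)"
proof (rule sorted_wrt_iff_nth_less[THEN iffD2], intro allI impI)
  fix x y assume xy: "x < y" "y < length (PL1 n m k)"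
  define N where "N = n ^ m"
  have N: "N > 0" using n by (simp add: N_def)
  have y: "y < k * N" using xy PL1_length by (simp add: N_def mult.commute)
  have x: "x < k * N" using xy y by simp
  have dx: "x div N < k" "x mod N < N" using x N by (auto simp: less_mult_imp_div_less mult.commute)
  have dy: "y div N < k" "y mod N < N" using y N by (auto simp: less_mult_imp_div_less mult.commute)
  have "PL1 n m k ! x = pos1 n m k (x div N) (x mod N)"
    using PL1_nth[OF dx[unfolded N_def]] unfolding N_def by (metis div_mult_mod_eq)
  moreover have "PL1 n m k ! y = pos1 n m k (y div N) (y mod N)"
    using PL1_nth[OF dy[unfolded N_def]] unfolding N_def by (metis div_mult_mod_eq)
  ultimately show "PL1 n m k ! x < PL1 n m k ! y"
    using pos1_mono[of "x div N" "y div N" "x mod N" "y mod N"] dx dy lex_lt[OF xy(1) N]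
    by (simp add: N_def)
qed

lemma PL1_bound: "set (PL1 n m k) \<subseteq> {..<n ^ (k + m) * k}"
  using pos1_bound by (auto simp: PL1_set)

end

lemma divN: "j < (N::nat) \<Longrightarrow> (x*N + j) div N = x" by simp

lemma take_eq_nth: "length ts \<ge> k \<Longrightarrow> length E = k \<Longrightarrow> (take k ts = E) = (\<forall>l<k. ts ! l = E ! l)"
  by (auto simp: list_eq_iff_nth_eq)

lemma map_var_upd: "length ts = r \<Longrightarrow> map (tval w (upd v [0..<r] ts)) (map Var [0..<r]) = ts"
  using map_upd[of "[0..<r]" ts v] by (simp add: comp_def)

lemma sat_inner1:
  assumes w: "w \<noteq> []" and i: "i < k"
  shows "sat w R v (alls [0..<k+m] (Imp (Rel i (map Var [0..<k+m]))
        (conjs (map (\<lambda>l. Eq (Var l) (encT k i ! l)) [0..<k])))) \<longleftrightarrow>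
     (\<forall>ts. length ts = k + m \<longrightarrow> set ts \<subseteq> {..<length w} \<longrightarrow> ts \<in> R i \<longrightarrow>
         take k ts = tuples (length w) k ! (length w ^ i - 1))"
proof -
  have key: "sat w R (upd v [0..<k + m] ts) (Imp (Rel i (map Var [0..<k + m])) (conjs (map (\<lambda>l. Eq (Var l) (encT k i ! l)) [0..<k])))
     \<longleftrightarrow> (ts \<in> R i \<longrightarrow> take k ts = tuples (length w) k ! (length w ^ i - 1))"
    if l: "length ts = k + m" for ts
  proof -
  define u where "u = upd v [0..<k+m] ts"
  have r: "map (tval w u) (map Var [0..<k+m]) = ts" unfolding u_def by (rule map_var_upd[OF l])
  have E: "map (tval w u) (encT k i) = tuples (length w) k ! (length w ^ i - 1)"
    using map_tval_encT[OF w] i by simp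
  have lE: "length (encT k i) = k" using i by simp
  have c: "sat w R u (conjs (map (\<lambda>l. Eq (Var l) (encT k i ! l)) [0..<k])) \<longleftrightarrow>
        (\<forall>l<k. ts ! l = tuples (length w) k ! (length w ^ i - 1) ! l)"
  proof -
    have "\<And>l. l < k \<Longrightarrow> u l = ts ! l" unfolding u_def using l by (intro upd_upt) auto
    moreover have "\<And>l. l < k \<Longrightarrow> tval w u (encT k i ! l) = tuples (length w) k ! (length w ^ i - 1) ! l"
      using E lE by (metis nth_map)
    ultimately show ?thesis by auto
  qed
  have lT: "length (tuples (length w) k ! (length w ^ i - 1)) = k"
    using E lE by (metis length_map)
  show "sat w R (upd v [0..<k + m] ts) (Imp (Rel i (map Var [0..<k + m])) (conjs (map (\<lambda>l. Eq (Var l) (encT k i ! l)) [0..<k])))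
     \<longleftrightarrow> (ts \<in> R i \<longrightarrow> take k ts = tuples (length w) k ! (length w ^ i - 1))"
    using r c take_eq_nth[of k ts, OF _ lT] l by (simp add: u_def[symmetric])
  qed
  show ?thesis unfolding sat_alls length_upt diff_zero using key by blast
qed

context
  fixes n m k :: nat
  assumes n: "n \<ge> 1"
begin

lemma decomp:
  assumes J: "J < n ^ (k + m)"
  shows "J div n ^ m < n ^ k" "J mod n ^ m < n ^ m"
    "tuples n (k + m) ! J = tuples n k ! (J div n ^ m) @ tuples n m ! (J mod n ^ m)"
proof -
  have N: "n ^ m > 0" using n by simp
  show a: "J div n ^ m < n ^ k" using J by (simp add: power_add less_mult_imp_div_less)
  show b: "J mod n ^ m < n ^ m" using N by simp
  have "tuples n (k + m) ! J = tuples n (k + m) ! (J div n ^ m * n ^ m + J mod n ^ m)" by (metis div_mult_mod_eq)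
  also have "\<dots> = tuples n k ! (J div n ^ m) @ tuples n m ! (J mod n ^ m)"
    by (rule tuples_append_nth[OF a b])
  finally show "tuples n (k + m) ! J = tuples n k ! (J div n ^ m) @ tuples n m ! (J mod n ^ m)" .
qed

lemma mem_PL1:
  assumes i: "i < k" and J: "J < n ^ (k + m)"
  shows "(J * k + i \<in> set (PL1 n m k)) \<longleftrightarrow> take k (tuples n (k + m) ! J) = tuples n k ! (n ^ i - 1)"
proof -
  define a where "a = J div n ^ m"
  define b where "b = J mod n ^ m"
  have a: "a < n ^ k" and b: "b < n ^ m" and T: "tuples n (k+m) ! J = tuples n k ! a @ tuples n m ! b"
    using decomp[OF J] by (simp_all add: a_def b_def)
  have la: "length (tuples n k ! a) = k" using tuples_nth_props[OF a] by simp
  have tk: "take k (tuples n (k + m) ! J) = tuples n k ! a" using T la by simp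
  have Jab: "J = a * n ^ m + b" unfolding a_def b_def by (metis div_mult_mod_eq)
  have Ei: "n ^ i - 1 < n ^ k" using E_bound[OF n i] .
  show ?thesis
  proof
    assume "J * k + i \<in> set (PL1 n m k)"
    then obtain i' j' where ij: "i' < k" "j' < n ^ m" "J * k + i = pos1 n m k i' j'"
      by (auto simp: PL1_set[OF n])
    then have "J = (n ^ i' - 1) * n ^ m + j' \<and> i = i'"
      unfolding pos1_def using divmod_unique[OF i ij(1)] by blast
    then have "a = n ^ i - 1" unfolding a_def using divN[OF ij(2), of "n ^ i' - 1"] by simp
    then show "take k (tuples n (k + m) ! J) = tuples n k ! (n ^ i - 1)" using tk by simp
  next
    assume "take k (tuples n (k + m) ! J) = tuples n k ! (n ^ i - 1)"
    then have "a = n ^ i - 1" using tk tuples_inj[OF a Ei] by simp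
    then have "J * k + i = pos1 n m k i b" using Jab by (simp add: pos1_def)
    then show "J * k + i \<in> set (PL1 n m k)" using i b by (auto simp: PL1_set[OF n])
  qed
qed

end

lemma string_over_n: "string_over t w \<Longrightarrow> length w \<ge> 1"
  by (cases w) (auto simp: string_over_def)

lemma dec_inter_mem: "i < k \<Longrightarrow> ts \<in> decode_inter n m k c i \<longleftrightarrow> (\<exists>J<n ^ m. ts = tuples n m ! J \<and> c ! (J * k + i))"
  by (auto simp: decode_inter_def)

lemma dec_concat_mem: "i < k \<Longrightarrow> ts \<in> decode_concat n m k c i \<longleftrightarrow> (\<exists>j<n ^ m. ts = tuples n m ! j \<and> c ! (i * n ^ m + j))"
  by (auto simp: decode_concat_def)

lemma G1_sem:
  assumes w: "w \<noteq> []" and n: "n = length w"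
  shows "sat w (decode_inter n (k + m) k c) v (G1 k m) \<longleftrightarrow>
    (\<forall>i<k. \<forall>J<n ^ (k + m). c ! (J * k + i) \<longrightarrow> take k (tuples n (k + m) ! J) = tuples n k ! (n ^ i - 1))"
proof -
  have "sat w (decode_inter n (k + m) k c) v (G1 k m) \<longleftrightarrow>
     (\<forall>i<k. \<forall>ts. length ts = k + m \<longrightarrow> set ts \<subseteq> {..<n} \<longrightarrow> ts \<in> decode_inter n (k + m) k c i \<longrightarrow>
         take k ts = tuples n k ! (n ^ i - 1))"
    unfolding G1_def sat_conjs using sat_inner1[OF w] n by auto
  also have "\<dots> \<longleftrightarrow> (\<forall>i<k. \<forall>J<n ^ (k + m). c ! (J * k + i) \<longrightarrow> take k (tuples n (k + m) ! J) = tuples n k ! (n ^ i - 1))"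
    using tuples_nth_props by (auto simp: dec_inter_mem) blast
  finally show ?thesis .
qed

lemma G1_good:
  assumes n: "n \<ge> 1"
  shows "(\<forall>i<k. \<forall>J<n ^ (k + m). c ! (J * k + i) \<longrightarrow> take k (tuples n (k + m) ! J) = tuples n k ! (n ^ i - 1))
     \<longleftrightarrow> (\<forall>p<n ^ (k + m) * k. p \<notin> set (PL1 n m k) \<longrightarrow> \<not> c ! p)"
proof
  assume P: "\<forall>i<k. \<forall>J<n ^ (k + m). c ! (J * k + i) \<longrightarrow> take k (tuples n (k + m) ! J) = tuples n k ! (n ^ i - 1)"
  show "\<forall>p<n ^ (k + m) * k. p \<notin> set (PL1 n m k) \<longrightarrow> \<not> c ! p"
  proof (intro allI impI notI)
    fix p assume p: "p < n ^ (k + m) * k" "p \<notin> set (PL1 n m k)" "c ! p"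
    have k: "k > 0" using p by (cases k) auto
    define J where "J = p div k"
    define i where "i = p mod k"
    have pe: "p = J * k + i" unfolding J_def i_def by simp
    have i: "i < k" using k by (simp add: i_def)
    have J: "J < n ^ (k + m)" using p(1) k by (simp add: J_def less_mult_imp_div_less)
    have "take k (tuples n (k + m) ! J) = tuples n k ! (n ^ i - 1)" using P i J p(3) pe by auto
    then have "p \<in> set (PL1 n m k)" using mem_PL1[OF n i J] pe by simp
    then show False using p(2) by simp
  qed
next
  assume g: "\<forall>p<n ^ (k + m) * k. p \<notin> set (PL1 n m k) \<longrightarrow> \<not> c ! p"
  show "\<forall>i<k. \<forall>J<n ^ (k + m). c ! (J * k + i) \<longrightarrow> take k (tuples n (k + m) ! J) = tuples n k ! (n ^ i - 1)"
  proof (intro allI impI)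
    fix i J assume i: "i < k" and J: "J < n ^ (k + m)" and c: "c ! (J * k + i)"
    have "J * k + i < n ^ (k + m) * k + 0" by (rule lt_block[OF J i])
    then have "J * k + i \<in> set (PL1 n m k)" using g c by auto
    then show "take k (tuples n (k + m) ! J) = tuples n k ! (n ^ i - 1)" using mem_PL1[OF n i J] by simp
  qed
qed

lemma rho1_sem:
  assumes w: "w \<noteq> []" and n: "n = length w" and i: "i < k" and ts: "length ts = m"
  shows "sat w (decode_inter n (k + m) k c) v (\<rho>1 k i ts) \<longleftrightarrow>
         map (tval w v) ts \<in> decode_concat n m k (map (nth c) (PL1 n m k)) i"
proof -
  have n1: "n \<ge> 1" using w n by (cases w) auto
  define t where "t = map (tval w v) ts"
  have lt: "length t = m" using ts by (simp add: t_def)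
  define E where "E = tuples n k ! (n ^ i - 1)"
  have Eb: "n ^ i - 1 < n ^ k" using E_bound[OF n1 i] .
  have lE: "length E = k" using tuples_nth_props[OF Eb] by (simp add: E_def)
  have enc: "map (tval w v) (encT k i) = E" using map_tval_encT[OF w, of i k v] i n by (simp add: E_def)
  have lhs: "sat w (decode_inter n (k + m) k c) v (\<rho>1 k i ts) \<longleftrightarrow>
      (\<exists>J<n ^ (k + m). E @ t = tuples n (k + m) ! J \<and> c ! (J * k + i))"
    using enc i by (simp add: \<rho>1_def dec_inter_mem t_def)
  have rhs: "t \<in> decode_concat n m k (map (nth c) (PL1 n m k)) i \<longleftrightarrow>
      (\<exists>j<n ^ m. t = tuples n m ! j \<and> c ! pos1 n m k i j)"
  proof -
    have "\<And>j. j < n ^ m \<Longrightarrow> map (nth c) (PL1 n m k) ! (i * n ^ m + j) = c ! pos1 n m k i j"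
    proof -
      fix j assume j: "j < n ^ m"
      have "i * n ^ m + j < (i + 1) * n ^ m" using j by simp
      also have "\<dots> \<le> k * n ^ m" using i by (intro mult_right_mono) auto
      finally have "i * n ^ m + j < length (PL1 n m k)" using PL1_length[OF n1] by (simp add: mult.commute)
      then show "map (nth c) (PL1 n m k) ! (i * n ^ m + j) = c ! pos1 n m k i j"
        using PL1_nth[OF n1 i j] by simp
    qed
    then show ?thesis using i by (auto simp: dec_concat_mem)
  qed
  have "(\<exists>J<n ^ (k + m). E @ t = tuples n (k + m) ! J \<and> c ! (J * k + i)) \<longleftrightarrow>
        (\<exists>j<n ^ m. t = tuples n m ! j \<and> c ! pos1 n m k i j)"
  proof
    assume "\<exists>J<n ^ (k + m). E @ t = tuples n (k + m) ! J \<and> c ! (J * k + i)"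
    then obtain J where J: "J < n ^ (k + m)" "E @ t = tuples n (k + m) ! J" "c ! (J * k + i)" by blast
    define a where "a = J div n ^ m"
    define b where "b = J mod n ^ m"
    have a: "a < n ^ k" and b: "b < n ^ m" and T: "tuples n (k+m) ! J = tuples n k ! a @ tuples n m ! b"
      using decomp[OF n1 J(1)] by (simp_all add: a_def b_def)
    have la: "length (tuples n k ! a) = k" using tuples_nth_props[OF a] by simp
    have "E = tuples n k ! a" "t = tuples n m ! b" using J(2) T la lE by (simp_all add: append_eq_append_conv)
    then have "a = n ^ i - 1" using tuples_inj[OF a Eb] by (simp add: E_def)
    then have "J * k + i = pos1 n m k i b" unfolding pos1_def a_def b_def by (metis div_mult_mod_eq)
    then show "\<exists>j<n ^ m. t = tuples n m ! j \<and> c ! pos1 n m k i j" using b J(3) \<open>t = tuples n m ! b\<close> by metis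
  next
    assume "\<exists>j<n ^ m. t = tuples n m ! j \<and> c ! pos1 n m k i j"
    then obtain j where j: "j < n ^ m" "t = tuples n m ! j" "c ! pos1 n m k i j" by blast
    define J where "J = (n ^ i - 1) * n ^ m + j"
    have J: "J < n ^ (k + m)" unfolding J_def by (rule J1_bound[OF n1 i j(1)])
    have "tuples n (k + m) ! J = E @ t" unfolding J_def E_def using tuples_append_nth[OF Eb j(1)] j(2) by simp
    moreover have "J * k + i = pos1 n m k i j" by (simp add: J_def pos1_def)
    ultimately show "\<exists>J<n ^ (k + m). E @ t = tuples n (k + m) ! J \<and> c ! (J * k + i)" using J j(3) by metis
  qed
  then show ?thesis using lhs rhs by (simp add: t_def)
qed

lemma dir1:
  assumes neut: "neutral_letter L s e" and es: "e < s" and qs: "qsentence t s m k phis"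
  shows "\<exists>m' k' psis. qsentence t s m' k' psis \<and>
           (\<forall>w. string_over t w \<longrightarrow> (qsem_concat L m k phis w \<longleftrightarrow> qsem_inter L m' k' psis w))"
proof -
  have mk: "1 \<le> m" "1 \<le> k" using qs by (auto simp: qsentence_def)
  have "qsentence t s (k + m) k (mkpsis (G1 k m) (\<rho>1 k) e phis) \<and>
     (\<forall>w. string_over t w \<longrightarrow> (qsem_concat L m k phis w \<longleftrightarrow> qsem_inter L (k + m) k (mkpsis (G1 k m) (\<rho>1 k) e phis) w))"
  proof (rule direction[OF neut es qs])
    show "1 \<le> k + m" "1 \<le> k" using mk by auto
    show "wf t (k + m) k (G1 k m)" by (simp add: G1_def)
    show "fv (G1 k m) = {}"
    proof -
      have "\<And>i l. l < k \<Longrightarrow> i < k \<Longrightarrow> fvt (encT k i ! l) = {}"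
      proof -
        fix i l assume "l < k" "i < k"
        then show "fvt (encT k i ! l) = {}" by (intro fvt_encT[of _ k i]) (simp add: nth_mem)
      qed
      then show ?thesis by (auto simp: G1_def)
    qed
    show "\<And>i ts. i < k \<Longrightarrow> length ts = m \<Longrightarrow> wf t (k + m) k (\<rho>1 k i ts)"
      by (simp add: \<rho>1_def)
    show "\<And>i ts. fv (\<rho>1 k i ts) = (\<Union>x\<in>set ts. fvt x)"
      using fvt_encT by (auto simp: \<rho>1_def)
    fix w assume w: "string_over t w"
    define n where "n = length w"
    have n1: "n \<ge> 1" using string_over_n[OF w] by (simp add: n_def)
    have wne: "w \<noteq> []" using w by (simp add: string_over_def)
    show "\<exists>PL. sorted_wrt (<) PL \<and> set PL \<subseteq> {..<length w ^ (k + m) * k}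
        \<and> length PL = length w ^ m * k
        \<and> (\<forall>c\<in>set (bitstrings (length w ^ (k + m) * k)).
             (sat w (decode_inter (length w) (k + m) k c) (\<lambda>_. 0) (G1 k m) \<longleftrightarrow> (\<forall>p<length w ^ (k + m) * k. p \<notin> set PL \<longrightarrow> \<not> c!p))
           \<and> ((\<forall>p<length w ^ (k + m) * k. p \<notin> set PL \<longrightarrow> \<not> c!p) \<longrightarrow>
               (\<forall>i<k. \<forall>ts v. length ts = m \<longrightarrow>
                  (sat w (decode_inter (length w) (k + m) k c) v (\<rho>1 k i ts) \<longleftrightarrow>
                   map (tval w v) ts \<in> decode_concat (length w) m k (map (nth c) PL) i))))"
      unfolding n_def[symmetric]
    proof (intro exI conjI ballI impI allI)
      show "sorted_wrt (<) (PL1 n m k)" by (rule PL1_sorted[OF n1])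
      show "set (PL1 n m k) \<subseteq> {..<n ^ (k + m) * k}" by (rule PL1_bound[OF n1])
      show "length (PL1 n m k) = n ^ m * k" by (rule PL1_length[OF n1])
      fix c
      show "sat w (decode_inter n (k + m) k c) (\<lambda>_. 0) (G1 k m) \<longleftrightarrow> (\<forall>p<n ^ (k + m) * k. p \<notin> set (PL1 n m k) \<longrightarrow> \<not> c!p)"
        using G1_sem[OF wne n_def] G1_good[OF n1] by simp
      fix i and ts :: "trm list" and v assume "i < k" "length ts = m"
      then show "sat w (decode_inter n (k + m) k c) v (\<rho>1 k i ts) \<longleftrightarrow>
                   map (tval w v) ts \<in> decode_concat n m k (map (nth c) (PL1 n m k)) i"
        by (rule rho1_sem[OF wne n_def])
    qed
  qed
  then show ?thesis by blast
qed

definition one :: fo where "one = Eq MinT MaxT"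

definition \<rho>2 :: "nat \<Rightarrow> nat \<Rightarrow> trm list \<Rightarrow> fo" where
  "\<rho>2 k i ts = Disj (Conj one (Rel i (ts @ encT k i))) (Conj (Neg one) (Rel 0 (ts @ encT k i)))"

definition G2 :: "nat \<Rightarrow> nat \<Rightarrow> fo" where
  "G2 k m = Disj one (conjs (map (\<lambda>i'. alls [0..<m+k] (Imp (Rel i' (map Var [0..<m+k]))
      (if i' = 0 then disjs (map (\<lambda>i. conjs (map (\<lambda>l. Eq (Var (m + l)) (encT k i ! l)) [0..<k])) [0..<k])
       else FF))) [0..<k]))"

definition pos2 :: "nat \<Rightarrow> nat \<Rightarrow> nat \<Rightarrow> nat \<Rightarrow> nat" where
  "pos2 n k j i = (if n = 1 then i else j * n ^ k + (n ^ i - 1))"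

definition PL2 :: "nat \<Rightarrow> nat \<Rightarrow> nat \<Rightarrow> nat list" where
  "PL2 n m k = concat (map (\<lambda>j. map (pos2 n k j) [0..<k]) [0..<n ^ m])"

context
  fixes n m k :: nat
  assumes n: "n \<ge> 1"
begin

lemma PL2_length: "length (PL2 n m k) = n ^ m * k"
  unfolding PL2_def by (subst length_concat_const[where L = k]) auto

lemma PL2_nth: "j < n ^ m \<Longrightarrow> i < k \<Longrightarrow> PL2 n m k ! (j * k + i) = pos2 n k j i"
  unfolding PL2_def by (subst nth_concat_blocks[where L = k]) auto

lemma PL2_set: "set (PL2 n m k) = {pos2 n k j i | j i. j < n ^ m \<and> i < k}"
  unfolding PL2_def by auto blast

lemma pos2_bound2: "n \<ge> 2 \<Longrightarrow> j < n ^ m \<Longrightarrow> i < k \<Longrightarrow> pos2 n k j i < n ^ (m + k)"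
proof -
  assume n2: "n \<ge> 2" and j: "j < n ^ m" and i: "i < k"
  have "j * n ^ k + (n ^ i - 1) < j * n ^ k + n ^ k" using E_bound[OF n i] by simp
  also have "\<dots> = (j + 1) * n ^ k" by simp
  also have "\<dots> \<le> n ^ m * n ^ k" using j by (intro mult_right_mono) auto
  finally show ?thesis using n2 by (simp add: pos2_def power_add)
qed

lemma pos2_bound: "j < n ^ m \<Longrightarrow> i < k \<Longrightarrow> pos2 n k j i < n ^ (m + k) * k"
proof (cases "n = 1")
  case True
  assume "j < n ^ m" "i < k"
  then show ?thesis using True by (simp add: pos2_def)
next
  case False
  assume j: "j < n ^ m" and i: "i < k"
  have "pos2 n k j i < n ^ (m + k)" using pos2_bound2[OF _ j i] False n by simp
  also have "\<dots> \<le> n ^ (m + k) * k" using i by simp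
  finally show ?thesis .
qed

lemma pos2_mono:
  assumes "j1 < n ^ m" "j2 < n ^ m" "i1 < k" "i2 < k" "j1 < j2 \<or> (j1 = j2 \<and> i1 < i2)"
  shows "pos2 n k j1 i1 < pos2 n k j2 i2"
proof (cases "n = 1")
  case True
  then show ?thesis using assms by (simp add: pos2_def)
next
  case False
  then have n2: "n \<ge> 2" using n by simp
  show ?thesis
  proof (cases "j1 < j2")
    case True
    have "j1 * n ^ k + (n ^ i1 - 1) < j2 * n ^ k + (n ^ i2 - 1)"
      by (rule lt_block[OF True E_bound[OF n assms(3)]])
    then show ?thesis using False by (simp add: pos2_def)
  next
    case False2: False
    then have "j1 = j2" "i1 < i2" using assms by auto
    moreover have "n ^ i1 < n ^ i2" using \<open>i1 < i2\<close> n2 by (simp add: power_strict_increasing)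
    moreover have "n ^ i1 \<ge> 1" using n by simp
    ultimately have "j2 * n ^ k + (n ^ i1 - 1) < j2 * n ^ k + (n ^ i2 - 1)"
      using diff_less_mono[of "n ^ i1" "n ^ i2" 1] by simp
    then show ?thesis using \<open>j1 = j2\<close> False by (simp add: pos2_def)
  qed
qed

lemma PL2_sorted: "sorted_wrt (<) (PL2 n m k)"
proof (rule sorted_wrt_iff_nth_less[THEN iffD2], intro allI impI)
  fix x y assume xy: "x < y" "y < length (PL2 n m k)"
  have y: "y < n ^ m * k" using xy PL2_length by simp
  have x: "x < n ^ m * k" using xy y by simp
  have k: "k > 0" using y by (cases k) auto
  have dx: "x div k < n ^ m" "x mod k < k" using x k by (auto simp: less_mult_imp_div_less)
  have dy: "y div k < n ^ m" "y mod k < k" using y k by (auto simp: less_mult_imp_div_less)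
  have "PL2 n m k ! x = pos2 n k (x div k) (x mod k)"
    using PL2_nth[OF dx] by (metis div_mult_mod_eq)
  moreover have "PL2 n m k ! y = pos2 n k (y div k) (y mod k)"
    using PL2_nth[OF dy] by (metis div_mult_mod_eq)
  ultimately show "PL2 n m k ! x < PL2 n m k ! y"
    using pos2_mono[OF dx(1) dy(1) dx(2) dy(2)] lex_lt[OF xy(1) k] by simp
qed

lemma PL2_bound: "set (PL2 n m k) \<subseteq> {..<n ^ (m + k) * k}"
  using pos2_bound by (auto simp: PL2_set)

lemma mem_PL2:
  assumes n2: "n \<ge> 2" and J: "J < n ^ (m + k)"
  shows "J \<in> set (PL2 n m k) \<longleftrightarrow> (\<exists>i<k. drop m (tuples n (m + k) ! J) = tuples n k ! (n ^ i - 1))"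
proof -
  define a where "a = J div n ^ k"
  define b where "b = J mod n ^ k"
  have a: "a < n ^ m" and b: "b < n ^ k" and T: "tuples n (m+k) ! J = tuples n m ! a @ tuples n k ! b"
    using decomp[where n=n and m=k and k=m, OF n] J by (simp_all add: a_def b_def)
  have la: "length (tuples n m ! a) = m" using tuples_nth_props[OF a] by simp
  have dr: "drop m (tuples n (m + k) ! J) = tuples n k ! b" using T la by simp
  have Jab: "J = a * n ^ k + b" unfolding a_def b_def by (metis div_mult_mod_eq)
  have nn: "n \<noteq> 1" using n2 by simp
  show ?thesis
  proof
    assume "J \<in> set (PL2 n m k)"
    then obtain j i where ji: "j < n ^ m" "i < k" "J = j * n ^ k + (n ^ i - 1)"
      using nn by (auto simp: PL2_set pos2_def)
    then have "b = n ^ i - 1" unfolding b_def using E_bound[OF n ji(2)] by simp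
    then show "\<exists>i<k. drop m (tuples n (m + k) ! J) = tuples n k ! (n ^ i - 1)" using dr ji(2) by auto
  next
    assume "\<exists>i<k. drop m (tuples n (m + k) ! J) = tuples n k ! (n ^ i - 1)"
    then obtain i where i: "i < k" "tuples n k ! b = tuples n k ! (n ^ i - 1)" using dr by auto
    then have "b = n ^ i - 1" using tuples_inj[OF b E_bound[OF n i(1)]] by simp
    then have "J = pos2 n k a i" using Jab nn by (simp add: pos2_def)
    then show "J \<in> set (PL2 n m k)" using a i(1) by (auto simp: PL2_set)
  qed
qed

end

lemma drop_eq_nth: "length ts = m + k \<Longrightarrow> length E = k \<Longrightarrow> (drop m ts = E) = (\<forall>l<k. ts ! (m + l) = E ! l)"
  by (auto simp: list_eq_iff_nth_eq)

lemma sat_one: "sat w R v one \<longleftrightarrow> length w \<le> 1"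
  by (auto simp: one_def)

lemma sat_inner2:
  assumes w: "w \<noteq> []"
  shows "sat w R v (alls [0..<m+k] (Imp (Rel i' (map Var [0..<m+k]))
      (if i' = 0 then disjs (map (\<lambda>i. conjs (map (\<lambda>l. Eq (Var (m + l)) (encT k i ! l)) [0..<k])) [0..<k])
       else FF))) \<longleftrightarrow>
     (\<forall>ts. length ts = m + k \<longrightarrow> set ts \<subseteq> {..<length w} \<longrightarrow> ts \<in> R i' \<longrightarrow>
         (i' = 0 \<and> (\<exists>i<k. drop m ts = tuples (length w) k ! (length w ^ i - 1))))"
proof -
  have key: "sat w R (upd v [0..<m + k] ts) (Imp (Rel i' (map Var [0..<m+k]))
      (if i' = 0 then disjs (map (\<lambda>i. conjs (map (\<lambda>l. Eq (Var (m + l)) (encT k i ! l)) [0..<k])) [0..<k])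
       else FF))
     \<longleftrightarrow> (ts \<in> R i' \<longrightarrow> (i' = 0 \<and> (\<exists>i<k. drop m ts = tuples (length w) k ! (length w ^ i - 1))))"
    if l: "length ts = m + k" for ts
  proof -
    define u where "u = upd v [0..<m+k] ts"
    have r: "map (tval w u) (map Var [0..<m+k]) = ts" unfolding u_def by (rule map_var_upd[OF l])
    have c: "sat w R u (conjs (map (\<lambda>l. Eq (Var (m + l)) (encT k i ! l)) [0..<k])) \<longleftrightarrow>
          drop m ts = tuples (length w) k ! (length w ^ i - 1)" if i: "i < k" for i
    proof -
      have E: "map (tval w u) (encT k i) = tuples (length w) k ! (length w ^ i - 1)"
        using map_tval_encT[OF w] i by simp
      have lE: "length (encT k i) = k" using i by simp
      have lT: "length (tuples (length w) k ! (length w ^ i - 1)) = k"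
        using E lE by (metis length_map)
      have "\<And>l. l < k \<Longrightarrow> u (m + l) = ts ! (m + l)" unfolding u_def using l by (intro upd_upt) auto
      moreover have "\<And>l. l < k \<Longrightarrow> tval w u (encT k i ! l) = tuples (length w) k ! (length w ^ i - 1) ! l"
        using E lE by (metis nth_map)
      ultimately show ?thesis using drop_eq_nth[OF l lT] by auto
    qed
    show ?thesis
    proof (cases "i' = 0")
      case True
      have "sat w R u (disjs (map (\<lambda>i. conjs (map (\<lambda>l. Eq (Var (m + l)) (encT k i ! l)) [0..<k])) [0..<k]))
        \<longleftrightarrow> (\<exists>i<k. drop m ts = tuples (length w) k ! (length w ^ i - 1))"
        using c by auto
      then show ?thesis using True r by (simp add: u_def[symmetric])
    next
      case False
      then show ?thesis using r by (simp add: u_def[symmetric] FF_def TT_def)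
    qed
  qed
  show ?thesis unfolding sat_alls length_upt diff_zero using key by blast
qed

lemma G2_sem:
  assumes w: "w \<noteq> []" and n: "n = length w"
  shows "sat w (decode_concat n (m + k) k c) v (G2 k m) \<longleftrightarrow>
    (n = 1 \<or> (\<forall>i'<k. \<forall>J<n ^ (m + k). c ! (i' * n ^ (m + k) + J) \<longrightarrow>
        i' = 0 \<and> (\<exists>i<k. drop m (tuples n (m + k) ! J) = tuples n k ! (n ^ i - 1))))"
proof -
  have n1: "n \<ge> 1" using w n by (cases w) auto
  have "sat w (decode_concat n (m + k) k c) v (G2 k m) \<longleftrightarrow>
     (n = 1 \<or> (\<forall>i'<k. \<forall>ts. length ts = m + k \<longrightarrow> set ts \<subseteq> {..<n} \<longrightarrow> ts \<in> decode_concat n (m + k) k c i' \<longrightarrow>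
         (i' = 0 \<and> (\<exists>i<k. drop m ts = tuples n k ! (n ^ i - 1)))))"
    unfolding G2_def sat.simps sat_conjs sat_one using sat_inner2[OF w] n n1 by auto
  also have "\<dots> \<longleftrightarrow> (n = 1 \<or> (\<forall>i'<k. \<forall>J<n ^ (m + k). c ! (i' * n ^ (m + k) + J) \<longrightarrow>
        i' = 0 \<and> (\<exists>i<k. drop m (tuples n (m + k) ! J) = tuples n k ! (n ^ i - 1))))"
    using tuples_nth_props by (auto simp: dec_concat_mem) blast+
  finally show ?thesis .
qed

lemma G2_good:
  assumes n: "n \<ge> 1"
  shows "(n = 1 \<or> (\<forall>i'<k. \<forall>J<n ^ (m + k). c ! (i' * n ^ (m + k) + J) \<longrightarrow>
        i' = 0 \<and> (\<exists>i<k. drop m (tuples n (m + k) ! J) = tuples n k ! (n ^ i - 1))))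
     \<longleftrightarrow> (\<forall>p<n ^ (m + k) * k. p \<notin> set (PL2 n m k) \<longrightarrow> \<not> c ! p)"
proof (cases "n = 1")
  case True
  have "\<forall>p<n ^ (m + k) * k. p \<in> set (PL2 n m k)"
  proof (intro allI impI)
    fix p assume "p < n ^ (m + k) * k"
    then have "p = pos2 n k 0 p" "p < k" using True by (simp_all add: pos2_def)
    then show "p \<in> set (PL2 n m k)" using PL2_set[OF n, of m k] True by auto
  qed
  then show ?thesis using True by auto
next
  case False
  then have n2: "n \<ge> 2" using n by simp
  define M where "M = n ^ (m + k)"
  have M: "M > 0" using n by (simp add: M_def)
  have PLM: "\<And>p. p \<in> set (PL2 n m k) \<Longrightarrow> p < M"
    using pos2_bound2[OF n n2] by (auto simp: PL2_set[OF n] M_def)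
  show ?thesis unfolding M_def[symmetric]
  proof
    assume "n = 1 \<or> (\<forall>i'<k. \<forall>J<M. c ! (i' * M + J) \<longrightarrow>
        i' = 0 \<and> (\<exists>i<k. drop m (tuples n (m + k) ! J) = tuples n k ! (n ^ i - 1)))"
    then have P: "\<forall>i'<k. \<forall>J<M. c ! (i' * M + J) \<longrightarrow>
        i' = 0 \<and> (\<exists>i<k. drop m (tuples n (m + k) ! J) = tuples n k ! (n ^ i - 1))" using False by simp
    show "\<forall>p<M * k. p \<notin> set (PL2 n m k) \<longrightarrow> \<not> c ! p"
    proof (intro allI impI notI)
      fix p assume p: "p < M * k" "p \<notin> set (PL2 n m k)" "c ! p"
      define i' where "i' = p div M"
      define J where "J = p mod M"
      have pe: "p = i' * M + J" unfolding i'_def J_def by simp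
      have i': "i' < k" using p(1) by (simp add: i'_def less_mult_imp_div_less mult.commute)
      have J: "J < M" using M by (simp add: J_def)
      have "i' = 0 \<and> (\<exists>i<k. drop m (tuples n (m + k) ! J) = tuples n k ! (n ^ i - 1))"
        using P i' J p(3) pe by auto
      then have "J \<in> set (PL2 n m k)" "p = J" using mem_PL2[OF n n2, of J] J pe by (auto simp: M_def)
      then show False using p(2) by simp
    qed
  next
    assume g: "\<forall>p<M * k. p \<notin> set (PL2 n m k) \<longrightarrow> \<not> c ! p"
    have "\<forall>i'<k. \<forall>J<M. c ! (i' * M + J) \<longrightarrow>
        i' = 0 \<and> (\<exists>i<k. drop m (tuples n (m + k) ! J) = tuples n k ! (n ^ i - 1))"
    proof (intro allI impI)
      fix i' J assume i': "i' < k" and J: "J < M" and c: "c ! (i' * M + J)"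
      have "i' * M + J < k * M" using lt_block[OF i' J, of 0] by (simp add: mult.commute)
      then have mem: "i' * M + J \<in> set (PL2 n m k)" using g c by (auto simp: mult.commute)
      then have "i' * M + J < M" using PLM by blast
      then have i0: "i' = 0" using M by (cases i') auto
      then have "J \<in> set (PL2 n m k)" using mem by simp
      then show "i' = 0 \<and> (\<exists>i<k. drop m (tuples n (m + k) ! J) = tuples n k ! (n ^ i - 1))"
        using mem_PL2[OF n n2, of J] J i0 by (simp add: M_def)
    qed
    then show "n = 1 \<or> (\<forall>i'<k. \<forall>J<M. c ! (i' * M + J) \<longrightarrow>
        i' = 0 \<and> (\<exists>i<k. drop m (tuples n (m + k) ! J) = tuples n k ! (n ^ i - 1)))" by simp
  qed
qed

lemma rho2_sem:
  assumes w: "w \<noteq> []" and n: "n = length w" and i: "i < k" and ts: "length ts = m"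
  shows "sat w (decode_concat n (m + k) k c) v (\<rho>2 k i ts) \<longleftrightarrow>
         map (tval w v) ts \<in> decode_inter n m k (map (nth c) (PL2 n m k)) i"
proof -
  have n1: "n \<ge> 1" using w n by (cases w) auto
  define t where "t = map (tval w v) ts"
  have lt: "length t = m" using ts by (simp add: t_def)
  define E where "E = tuples n k ! (n ^ i - 1)"
  have Eb: "n ^ i - 1 < n ^ k" using E_bound[OF n1 i] .
  have lE: "length E = k" using tuples_nth_props[OF Eb] by (simp add: E_def)
  have enc: "map (tval w v) (encT k i) = E" using map_tval_encT[OF w, of i k v] i n by (simp add: E_def)
  have rhs: "t \<in> decode_inter n m k (map (nth c) (PL2 n m k)) i \<longleftrightarrow>
      (\<exists>j<n ^ m. t = tuples n m ! j \<and> c ! pos2 n k j i)"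
  proof -
    have "\<And>j. j < n ^ m \<Longrightarrow> map (nth c) (PL2 n m k) ! (j * k + i) = c ! pos2 n k j i"
    proof -
      fix j assume j: "j < n ^ m"
      have "j * k + i < (j + 1) * k" using i by simp
      also have "\<dots> \<le> n ^ m * k" using j by (intro mult_right_mono) auto
      finally have "j * k + i < length (PL2 n m k)" using PL2_length[OF n1] by simp
      then show "map (nth c) (PL2 n m k) ! (j * k + i) = c ! pos2 n k j i"
        using PL2_nth[OF n1 j i] by simp
    qed
    then show ?thesis using i by (auto simp: dec_inter_mem)
  qed
  have sat_rel: "\<And>i'. sat w (decode_concat n (m + k) k c) v (Rel i' (ts @ encT k i)) \<longleftrightarrow>
      t @ E \<in> decode_concat n (m + k) k c i'"
    using enc by (simp add: t_def)
  show ?thesis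
  proof (cases "n = 1")
    case True
    have lhs: "sat w (decode_concat n (m + k) k c) v (\<rho>2 k i ts) \<longleftrightarrow>
        t @ E = tuples n (m + k) ! 0 \<and> c ! i"
      using True n sat_rel[of i] i by (simp add: \<rho>2_def sat_one dec_concat_mem)
    have T0: "tuples n (m + k) ! 0 = tuples n m ! 0 @ E"
      using tuples_append_nth[of 0 n m 0 k] True by (simp add: E_def)
    have "t @ E = tuples n (m + k) ! 0 \<and> c ! i \<longleftrightarrow> (\<exists>j<n ^ m. t = tuples n m ! j \<and> c ! pos2 n k j i)"
      using True T0 by (simp add: pos2_def)
    then show ?thesis using lhs rhs by (simp add: t_def)
  next
    case False
    then have n2: "n \<ge> 2" using n1 by simp
    have lhs: "sat w (decode_concat n (m + k) k c) v (\<rho>2 k i ts) \<longleftrightarrow>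
        (\<exists>J<n ^ (m + k). t @ E = tuples n (m + k) ! J \<and> c ! J)"
    proof -
      have "\<not> sat w (decode_concat n (m + k) k c) v one" using n2 n by (simp add: sat_one)
      then have "sat w (decode_concat n (m + k) k c) v (\<rho>2 k i ts) \<longleftrightarrow> t @ E \<in> decode_concat n (m + k) k c 0"
        using sat_rel[of 0] by (simp add: \<rho>2_def)
      also have "\<dots> \<longleftrightarrow> (\<exists>J<n ^ (m + k). t @ E = tuples n (m + k) ! J \<and> c ! J)"
        using i by (simp add: dec_concat_mem)
      finally show ?thesis .
    qed
    have "(\<exists>J<n ^ (m + k). t @ E = tuples n (m + k) ! J \<and> c ! J) \<longleftrightarrow>
          (\<exists>j<n ^ m. t = tuples n m ! j \<and> c ! pos2 n k j i)"
    proof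
      assume "\<exists>J<n ^ (m + k). t @ E = tuples n (m + k) ! J \<and> c ! J"
      then obtain J where J: "J < n ^ (m + k)" "t @ E = tuples n (m + k) ! J" "c ! J" by blast
      define a where "a = J div n ^ k"
      define b where "b = J mod n ^ k"
      have a: "a < n ^ m" and b: "b < n ^ k" and T: "tuples n (m+k) ! J = tuples n m ! a @ tuples n k ! b"
        using decomp[where n=n and m=k and k=m, OF n1] J(1) by (simp_all add: a_def b_def)
      have la: "length (tuples n m ! a) = m" using tuples_nth_props[OF a] by simp
      have "t = tuples n m ! a" "E = tuples n k ! b" using J(2) T la lt by (simp_all add: append_eq_append_conv)
      then have "b = n ^ i - 1" using tuples_inj[OF b Eb] by (simp add: E_def)
      then have "J = pos2 n k a i" unfolding pos2_def a_def b_def using False by (metis div_mult_mod_eq)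
      then show "\<exists>j<n ^ m. t = tuples n m ! j \<and> c ! pos2 n k j i" using a J(3) \<open>t = tuples n m ! a\<close> by metis
    next
      assume "\<exists>j<n ^ m. t = tuples n m ! j \<and> c ! pos2 n k j i"
      then obtain j where j: "j < n ^ m" "t = tuples n m ! j" "c ! pos2 n k j i" by blast
      have Jb: "pos2 n k j i < n ^ (m + k)" by (rule pos2_bound2[OF n1 n2 j(1) i])
      have "tuples n (m + k) ! pos2 n k j i = t @ E"
        using tuples_append_nth[OF j(1) Eb] j(2) False by (simp add: pos2_def E_def)
      then show "\<exists>J<n ^ (m + k). t @ E = tuples n (m + k) ! J \<and> c ! J" using Jb j(3) by metis
    qed
    then show ?thesis using lhs rhs by (simp add: t_def)
  qed
qed

lemma dir2:
  assumes neut: "neutral_letter L s e" and es: "e < s" and qs: "qsentence t s m k phis"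
  shows "\<exists>m' k' psis. qsentence t s m' k' psis \<and>
           (\<forall>w. string_over t w \<longrightarrow> (qsem_inter L m k phis w \<longleftrightarrow> qsem_concat L m' k' psis w))"
proof -
  have mk: "1 \<le> m" "1 \<le> k" using qs by (auto simp: qsentence_def)
  have "qsentence t s (m + k) k (mkpsis (G2 k m) (\<rho>2 k) e phis) \<and>
     (\<forall>w. string_over t w \<longrightarrow> (qsem_inter L m k phis w \<longleftrightarrow> qsem_concat L (m + k) k (mkpsis (G2 k m) (\<rho>2 k) e phis) w))"
  proof (rule direction[OF neut es qs])
    show "1 \<le> m + k" "1 \<le> k" using mk by auto
    show "wf t (m + k) k (G2 k m)" using mk by (simp add: G2_def one_def FF_def TT_def)
    show "fv (G2 k m) = {}"
    proof -
      have "\<And>i l. l < k \<Longrightarrow> i < k \<Longrightarrow> fvt (encT k i ! l) = {}"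
      proof -
        fix i l assume "l < k" "i < k"
        then show "fvt (encT k i ! l) = {}" by (intro fvt_encT[of _ k i]) (simp add: nth_mem)
      qed
      then show ?thesis by (auto simp: G2_def one_def FF_def TT_def split: if_split_asm)
    qed
    show "\<And>i ts. i < k \<Longrightarrow> length ts = m \<Longrightarrow> wf t (m + k) k (\<rho>2 k i ts)"
      using mk by (simp add: \<rho>2_def one_def)
    show "\<And>i ts. fv (\<rho>2 k i ts) = (\<Union>x\<in>set ts. fvt x)"
      using fvt_encT by (auto simp: \<rho>2_def one_def)
    fix w assume w: "string_over t w"
    define n where "n = length w"
    have n1: "n \<ge> 1" using string_over_n[OF w] by (simp add: n_def)
    have wne: "w \<noteq> []" using w by (simp add: string_over_def)
    show "\<exists>PL. sorted_wrt (<) PL \<and> set PL \<subseteq> {..<length w ^ (m + k) * k}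
        \<and> length PL = length w ^ m * k
        \<and> (\<forall>c\<in>set (bitstrings (length w ^ (m + k) * k)).
             (sat w (decode_concat (length w) (m + k) k c) (\<lambda>_. 0) (G2 k m) \<longleftrightarrow> (\<forall>p<length w ^ (m + k) * k. p \<notin> set PL \<longrightarrow> \<not> c!p))
           \<and> ((\<forall>p<length w ^ (m + k) * k. p \<notin> set PL \<longrightarrow> \<not> c!p) \<longrightarrow>
               (\<forall>i<k. \<forall>ts v. length ts = m \<longrightarrow>
                  (sat w (decode_concat (length w) (m + k) k c) v (\<rho>2 k i ts) \<longleftrightarrow>
                   map (tval w v) ts \<in> decode_inter (length w) m k (map (nth c) PL) i))))"
      unfolding n_def[symmetric]
    proof (intro exI conjI ballI impI allI)
      show "sorted_wrt (<) (PL2 n m k)" by (rule PL2_sorted[OF n1])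
      show "set (PL2 n m k) \<subseteq> {..<n ^ (m + k) * k}" by (rule PL2_bound[OF n1])
      show "length (PL2 n m k) = n ^ m * k" by (rule PL2_length[OF n1])
      fix c
      show "sat w (decode_concat n (m + k) k c) (\<lambda>_. 0) (G2 k m) \<longleftrightarrow> (\<forall>p<n ^ (m + k) * k. p \<notin> set (PL2 n m k) \<longrightarrow> \<not> c!p)"
        using G2_sem[OF wne n_def] G2_good[OF n1] by simp
      fix i and ts :: "trm list" and v assume "i < k" "length ts = m"
      then show "sat w (decode_concat n (m + k) k c) v (\<rho>2 k i ts) \<longleftrightarrow>
                   map (tval w v) ts \<in> decode_inter n m k (map (nth c) (PL2 n m k)) i"
        by (rule rho2_sem[OF wne n_def])
    qed
  qed
  then show ?thesis by blast
qed

theorem proposition2p9: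
  fixes L :: "nat list set" and s e :: nat
  assumes "L \<subseteq> lists {..<s}"
    and "e < s"
    and "neutral_letter L s e"
  shows "logics_equiv L s"
  unfolding logics_equiv_def
  using dir1[OF assms(3) assms(2)] dir2[OF assms(3) assms(2)] by blast

end
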